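(* Let $F \in S$ be a homogeneous form of degree $d$ and let $\alpha \in T_1$ be a linear form. Then $r(F) \geq \mathrm{al}(\alpha\circ F) - \mathrm{al}(\alpha^2\circ F)$.
   Context: $S=\mathbb{C}[x_1,\dots,x_n]$, $T=\mathbb{C}[\alpha_1,\dots,\alpha_n]$ acting on $S$ by $\alpha_i\mapsto\partial/\partial x_i$ (written $\Theta\circ F$). $\mathrm{al}(G)=\dim_{\mathbb{C}}\{\Theta\circ G:\Theta\in T\}$ is the apolar length (dimension of the space of all partial derivatives of all orders of $G$, including $G$; it is $0$ if $G=0$). $r(F)$ is the Waring rank: the least $r$ with $F=\sum_{i=1}^r c_i\ell_i^d$ for linear forms $\ell_i$ and scalars $c_i$. *)

theory Defs
  imports Complex_Main "HOL-Library.Function_Algebras"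
begin

(* Polynomials in n variables over C, represented by their coefficient function on
   exponent vectors (monomials) m :: nat => nat; variables are indexed by i < n. *)
type_synonym mono = "nat \<Rightarrow> nat"
type_synonym cpoly = "mono \<Rightarrow> complex"

definition supp :: "cpoly \<Rightarrow> mono set" where
  "supp p = {m. p m \<noteq> 0}"

definition is_poly :: "nat \<Rightarrow> cpoly \<Rightarrow> bool" where
  "is_poly n p \<longleftrightarrow> finite (supp p) \<and> (\<forall>m\<in>supp p. \<forall>i\<ge>n. m i = 0)"

definition homog :: "nat \<Rightarrow> nat \<Rightarrow> cpoly \<Rightarrow> bool" where
  "homog n d p \<longleftrightarrow> is_poly n p \<and> (\<forall>m\<in>supp p. (\<Sum>i<n. m i) = d)"

definition pmult :: "cpoly \<Rightarrow> cpoly \<Rightarrow> cpoly" where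
  "pmult p q = (\<lambda>m. \<Sum>(a,b)\<in>supp p \<times> supp q.
      if (\<lambda>i. a i + b i) = m then p a * q b else 0)"

definition pone :: cpoly where
  "pone = (\<lambda>m. if m = (\<lambda>_. 0) then 1 else 0)"

fun ppow :: "cpoly \<Rightarrow> nat \<Rightarrow> cpoly" where
  "ppow p 0 = pone"
| "ppow p (Suc k) = pmult p (ppow p k)"

definition pderiv_i :: "nat \<Rightarrow> cpoly \<Rightarrow> cpoly" where
  "pderiv_i i F = (\<lambda>m. of_nat (m i + 1) * F (m(i := m i + 1)))"

definition diffmono :: "nat \<Rightarrow> mono \<Rightarrow> cpoly \<Rightarrow> cpoly" where
  "diffmono n m F = foldr (\<lambda>i. pderiv_i i ^^ m i) [0..<n] F"

(* apolarity action Theta o F, Theta in T = C[alpha_1..alpha_n], alpha_i acting as d/dx_i *)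
definition apply_op :: "nat \<Rightarrow> cpoly \<Rightarrow> cpoly \<Rightarrow> cpoly" where
  "apply_op n \<Theta> F = (\<lambda>k. \<Sum>m\<in>supp \<Theta>. \<Theta> m * diffmono n m F k)"

definition cscale :: "complex \<Rightarrow> cpoly \<Rightarrow> cpoly" where
  "cscale c f = (\<lambda>x. c * f x)"

definition apolar_length :: "nat \<Rightarrow> cpoly \<Rightarrow> nat" where
  "apolar_length n G = vector_space.dim cscale {apply_op n \<Theta> G | \<Theta>. is_poly n \<Theta>}"

definition waring_rank :: "nat \<Rightarrow> nat \<Rightarrow> cpoly \<Rightarrow> nat" where
  "waring_rank n d F = (LEAST r. \<exists>c :: nat \<Rightarrow> complex. \<exists>l :: nat \<Rightarrow> cpoly.
      (\<forall>i<r. homog n 1 (l i)) \<and> F = (\<lambda>m. \<Sum>i<r. c i * ppow (l i) d m))"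

end

theory Submission
  imports Defs
begin

lemma cscale_add: "cscale a (x + y) = cscale a x + cscale a y"
  by (auto simp: cscale_def algebra_simps)

interpretation V: vector_space cscale
  by unfold_locales (auto simp: cscale_def algebra_simps)

lemma fun_sum_apply: "(\<Sum>x\<in>A. f x) (k::'b) = (\<Sum>x\<in>A. f x k)"
  by (induction A rule: infinite_finite_induct) auto

lemma cscale_apply[simp]: "cscale c f x = c * f x" by (simp add: cscale_def)

definition lin :: "(cpoly \<Rightarrow> cpoly) \<Rightarrow> bool" where
  "lin f \<longleftrightarrow> (\<forall>F G. f (F + G) = f F + f G) \<and> (\<forall>c F. f (cscale c F) = cscale c (f F))"

lemma lin_linear: "lin f \<Longrightarrow> Vector_Spaces.linear cscale cscale f"
  unfolding lin_def by unfold_locales auto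

lemma lin_zero: "lin f \<Longrightarrow> f 0 = 0"
  unfolding lin_def by (metis add_cancel_right_right)

lemma lin_sum: "lin f \<Longrightarrow> f (\<Sum>x\<in>A. g x) = (\<Sum>x\<in>A. f (g x))"
  by (induction A rule: infinite_finite_induct) (auto simp: lin_zero lin_def)

lemma lin_comp: "lin f \<Longrightarrow> lin g \<Longrightarrow> lin (f \<circ> g)"
  unfolding lin_def by auto

lemma lin_id: "lin id" unfolding lin_def by auto

lemma lin_funpow: "lin f \<Longrightarrow> lin (f ^^ k)"
  by (induction k) (auto simp: lin_id lin_comp simp del: funpow.simps(2) simp add: funpow_Suc_right)

lemma lin_foldr: "(\<And>i. i \<in> set xs \<Longrightarrow> lin (f i)) \<Longrightarrow> lin (foldr f xs)"
  by (induction xs) (auto simp: lin_id lin_comp)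

lemma lin_pderiv: "lin (pderiv_i i)"
  unfolding lin_def pderiv_i_def by (auto simp: fun_eq_iff algebra_simps)

lemma pderiv_comm: "pderiv_i i (pderiv_i j F) = pderiv_i j (pderiv_i i F)"
  by (cases "i = j") (auto simp: pderiv_i_def fun_eq_iff fun_upd_twist)

lemma lin_diffmono: "lin (diffmono n m)"
proof -
  have "lin (foldr (\<lambda>i. pderiv_i i ^^ m i) [0..<n])"
    by (rule lin_foldr) (auto intro: lin_funpow lin_pderiv)
  thus ?thesis unfolding diffmono_def[abs_def] by (simp add: fun_eq_iff)
qed

lemma funpow_commute_gen:
  assumes "\<And>x. f (g x) = g (f x)"
  shows "(f ^^ k) (g x) = g ((f ^^ k) x)"
  by (induction k) (auto simp: assms)

lemma foldr_commute:
  assumes "\<And>i j x. f i (f j x) = f j (f i x)"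
  shows "foldr (\<lambda>j. f j ^^ m j) xs (f i x) = f i (foldr (\<lambda>j. f j ^^ m j) xs x)"
  by (induction xs) (auto simp: funpow_commute_gen assms)

lemma foldr_upd:
  assumes "\<And>i j x. f i (f j x) = f j (f i x)" "i \<in> set xs" "distinct xs"
  shows "foldr (\<lambda>j. f j ^^ (m(i := m i + 1)) j) xs x = f i (foldr (\<lambda>j. f j ^^ m j) xs x)"
  using assms(2,3)
proof (induction xs)
  case Nil thus ?case by simp
next
  case (Cons j xs)
  show ?case
  proof (cases "j = i")
    case True
    with Cons have "i \<notin> set xs" by auto
    hence "foldr (\<lambda>j. f j ^^ (m(i := m i + 1)) j) xs x = foldr (\<lambda>j. f j ^^ m j) xs x"
      by (intro foldr_cong) auto
    thus ?thesis using True by (simp add: funpow_commute_gen assms(1))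
  next
    case False
    with Cons have "foldr (\<lambda>j. f j ^^ (m(i := m i + 1)) j) xs x = f i (foldr (\<lambda>j. f j ^^ m j) xs x)"
      by auto
    thus ?thesis using False by (simp add: funpow_commute_gen assms(1))
  qed
qed

lemma diffmono_pderiv_comm: "diffmono n m (pderiv_i i F) = pderiv_i i (diffmono n m F)"
  unfolding diffmono_def by (rule foldr_commute) (rule pderiv_comm)

lemma diffmono_upd: "i < n \<Longrightarrow> diffmono n (m(i := m i + 1)) F = pderiv_i i (diffmono n m F)"
  unfolding diffmono_def by (rule foldr_upd) (auto intro: pderiv_comm)

lemma diffmono_zero: "diffmono n (\<lambda>_. 0) F = F"
  unfolding diffmono_def by (induction n) auto

definition ev :: "nat \<Rightarrow> mono" where "ev i = (\<lambda>k. if k = i then 1 else 0)"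

definition lmult :: "nat \<Rightarrow> (nat \<Rightarrow> complex) \<Rightarrow> cpoly \<Rightarrow> cpoly" where
  "lmult n a P = (\<lambda>m. \<Sum>i<n. a i * (if 0 < m i then P (m(i := m i - 1)) else 0))"

definition lpow :: "nat \<Rightarrow> (nat \<Rightarrow> complex) \<Rightarrow> nat \<Rightarrow> cpoly" where
  "lpow n a k = (lmult n a ^^ k) pone"

definition dop :: "nat \<Rightarrow> (nat \<Rightarrow> complex) \<Rightarrow> cpoly \<Rightarrow> cpoly" where
  "dop n a H = (\<lambda>m. \<Sum>i<n. a i * pderiv_i i H m)"

definition coef :: "cpoly \<Rightarrow> nat \<Rightarrow> complex" where "coef l = (\<lambda>i. l (ev i))"

lemma lin_lmult: "lin (lmult n a)"
  unfolding lin_def lmult_def by (auto simp: fun_eq_iff sum.distrib[symmetric] sum_distrib_left algebra_simps intro!: sum.cong)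

lemma lin_dop: "lin (dop n a)"
  unfolding lin_def dop_def pderiv_i_def by (auto simp: fun_eq_iff algebra_simps sum.distrib sum_distrib_left)

lemma lmult_comm: "lmult n a (lmult n b P) = lmult n b (lmult n a P)"
proof -
  have "lmult n a (lmult n b P) m = lmult n b (lmult n a P) m" for m
  proof -
    have "lmult n a (lmult n b P) m = (\<Sum>i<n. \<Sum>j<n. a i * b j *
       (if 0 < m i \<and> 0 < (m(i := m i - 1)) j then P ((m(i := m i - 1))(j := (m(i := m i - 1)) j - 1)) else 0))"
      unfolding lmult_def by (auto simp: sum_distrib_left algebra_simps intro!: sum.cong)
    also have "\<dots> = (\<Sum>j<n. \<Sum>i<n. a i * b j *
       (if 0 < m j \<and> 0 < (m(j := m j - 1)) i then P ((m(j := m j - 1))(i := (m(j := m j - 1)) i - 1)) else 0))"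
      by (subst sum.swap) (auto intro!: sum.cong simp: fun_upd_twist)
    also have "\<dots> = lmult n b (lmult n a P) m"
      unfolding lmult_def by (auto simp: sum_distrib_left algebra_simps intro!: sum.cong)
    finally show ?thesis .
  qed
  thus ?thesis by auto
qed

lemma lmult_add_coef: "lmult n (\<lambda>i. a i + b i) P = lmult n a P + lmult n b P"
  unfolding lmult_def by (auto simp: fun_eq_iff algebra_simps sum.distrib)

lemma lmult_scale_coef: "lmult n (\<lambda>i. c * a i) P = cscale c (lmult n a P)"
  unfolding lmult_def by (auto simp: fun_eq_iff algebra_simps sum_distrib_left)

lemma pderiv_lmult:
  "pderiv_i j (lmult n a P) = cscale (if j < n then a j else 0) P + lmult n a (pderiv_i j P)"
proof -
  have "pderiv_i j (lmult n a P) m = (if j < n then a j else 0) * P m + lmult n a (pderiv_i j P) m" for m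
  proof -
    let ?g = "\<lambda>i. a i * (if 0 < m i then pderiv_i j P (m(i := m i - 1)) else 0)"
    have "pderiv_i j (lmult n a P) m = (\<Sum>i<n. of_nat (m j + 1) * (a i *
        (if 0 < (m(j := m j + 1)) i then P ((m(j := m j + 1))(i := (m(j := m j + 1)) i - 1)) else 0)))"
      unfolding pderiv_i_def lmult_def by (simp add: sum_distrib_left)
    also have "\<dots> = (\<Sum>i<n. (if i = j then a j * P m else 0) + ?g i)"
    proof (rule sum.cong[OF refl])
      fix i assume "i \<in> {..<n}"
      show "of_nat (m j + 1) * (a i *
        (if 0 < (m(j := m j + 1)) i then P ((m(j := m j + 1))(i := (m(j := m j + 1)) i - 1)) else 0))
        = (if i = j then a j * P m else 0) + ?g i"
      proof (cases "i = j")
        case True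
        thus ?thesis by (cases "m j") (auto simp: pderiv_i_def algebra_simps fun_upd_idem)
      next
        case False
        thus ?thesis by (auto simp: pderiv_i_def algebra_simps fun_upd_twist)
      qed
    qed
    also have "\<dots> = (if j < n then a j else 0) * P m + lmult n a (pderiv_i j P) m"
      by (simp add: sum.distrib lmult_def)
    finally show ?thesis .
  qed
  thus ?thesis by (auto simp: fun_eq_iff)
qed

lemma pderiv_pone: "pderiv_i j pone = 0"
  by (auto simp: pderiv_i_def pone_def fun_eq_iff dest: fun_cong[of _ _ j])

lemma lpow_Suc: "lpow n a (Suc k) = lmult n a (lpow n a k)"
  by (simp add: lpow_def)

lemma lpow_0: "lpow n a 0 = pone" by (simp add: lpow_def)

lemma pderiv_lpow:
  "pderiv_i j (lpow n a k) = cscale (of_nat k * (if j < n then a j else 0)) (lpow n a (k - 1))"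
proof (induction k)
  case 0 thus ?case by (auto simp: lpow_0 pderiv_pone fun_eq_iff)
next
  case (Suc k)
  have l: "lin (lmult n a)" by (rule lin_lmult)
  let ?a = "(if j < n then a j else 0)"
  have "pderiv_i j (lpow n a (Suc k)) = cscale ?a (lpow n a k) + lmult n a (cscale (of_nat k * ?a) (lpow n a (k - 1)))"
    by (simp only: lpow_Suc pderiv_lmult Suc.IH)
  also have "lmult n a (cscale (of_nat k * ?a) (lpow n a (k - 1))) = cscale (of_nat k * ?a) (lpow n a k)"
  proof (cases k)
    case 0 thus ?thesis using l lin_zero[OF l] by (auto simp: lin_def fun_eq_iff)
  next
    case (Suc k') thus ?thesis using l by (auto simp: lin_def lpow_Suc)
  qed
  finally show ?case by (auto simp: fun_eq_iff algebra_simps)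
qed

lemma dop_lpow:
  "dop n b (lpow n a k) = cscale (of_nat k * (\<Sum>j<n. b j * a j)) (lpow n a (k - 1))"
  by (auto simp: dop_def pderiv_lpow fun_eq_iff sum_distrib_left sum_distrib_right algebra_simps)

lemma pderiv_sum_fun: "pderiv_i j (\<lambda>m. \<Sum>i\<in>A. f i m) = (\<lambda>m. \<Sum>i\<in>A. pderiv_i j (f i) m)"
  unfolding pderiv_i_def by (simp add: sum_distrib_left)

lemma pderiv_scale_fun: "pderiv_i j (\<lambda>m. c * f m) = (\<lambda>m. c * pderiv_i j f m)"
  unfolding pderiv_i_def by (simp add: algebra_simps)

lemma dop_pderiv: "pderiv_i j (dop n a H) = dop n a (pderiv_i j H)"
proof -
  have "pderiv_i j (dop n a H) = (\<lambda>m. \<Sum>i<n. pderiv_i j (\<lambda>m. a i * pderiv_i i H m) m)"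
    unfolding dop_def by (rule pderiv_sum_fun)
  also have "\<dots> = dop n a (pderiv_i j H)"
    unfolding dop_def pderiv_scale_fun by (simp add: pderiv_comm)
  finally show ?thesis .
qed

lemma diffmono_upd': "i < n \<Longrightarrow> diffmono n (m(i := Suc (m i))) F = pderiv_i i (diffmono n m F)"
  using diffmono_upd by simp

lemma apply_op_alt:
  assumes "finite S" "supp \<Theta> \<subseteq> S"
  shows "apply_op n \<Theta> F = (\<lambda>k. \<Sum>m\<in>S. \<Theta> m * diffmono n m F k)"
  unfolding apply_op_def
  by (rule ext, rule sum.mono_neutral_left) (use assms in \<open>auto simp: supp_def\<close>)

lemma lin_apply_op: "lin (apply_op n \<Theta>)"
  using lin_diffmono[of n] unfolding lin_def apply_op_def
  by (auto simp: fun_eq_iff sum.distrib[symmetric] sum_distrib_left algebra_simps intro!: sum.cong)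

lemma foldr_commute_g:
  assumes "\<And>j x. f j (g x) = g (f j x)"
  shows "foldr (\<lambda>j. f j ^^ m j) xs (g x) = g (foldr (\<lambda>j. f j ^^ m j) xs x)"
  by (induction xs) (auto simp: funpow_commute_gen assms)

lemma diffmono_dop: "diffmono n m (dop n a H) = dop n a (diffmono n m H)"
  unfolding diffmono_def by (rule foldr_commute_g) (rule dop_pderiv)

lemma dop_sum_fun: "dop n a (\<lambda>k. \<Sum>m\<in>S. c m * f m k) = (\<lambda>k. \<Sum>m\<in>S. c m * dop n a (f m) k)"
  unfolding dop_def pderiv_sum_fun pderiv_scale_fun
  by (auto simp: fun_eq_iff sum_distrib_left algebra_simps intro: sum.swap)

lemma apply_op_dop: "apply_op n \<Theta> (dop n a H) = dop n a (apply_op n \<Theta> H)"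
  unfolding apply_op_def diffmono_dop dop_sum_fun ..

lemma supp_pone: "supp pone = {\<lambda>_. 0}"
  by (auto simp: supp_def pone_def)

lemma pone_zero[simp]: "pone (\<lambda>_. 0) = 1" by (simp add: pone_def)

lemma apply_op_pone: "apply_op n pone F = F"
  unfolding apply_op_def supp_pone by (simp add: diffmono_zero pone_def)

lemma upd_inj: "inj (\<lambda>b::mono. b(i := b i + 1))"
  by (rule injI) (metis add_right_cancel fun_upd_eqD fun_upd_idem_iff fun_upd_same fun_upd_upd)

lemma upd_inj': "inj (\<lambda>b::mono. b(i := Suc (b i)))"
  using upd_inj[of i] by simp

lemma supp_lmult: "supp (lmult n a P) \<subseteq> (\<lambda>(i,b). b(i := b i + 1)) ` ({..<n} \<times> supp P)"
proof
  fix m assume "m \<in> supp (lmult n a P)"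
  have "\<exists>i<n. 0 < m i \<and> P (m(i := m i - 1)) \<noteq> 0"
  proof (rule ccontr)
    assume "\<not> ?thesis"
    hence "lmult n a P m = 0" unfolding lmult_def by (intro sum.neutral) auto
    thus False using \<open>m \<in> supp (lmult n a P)\<close> by (simp add: supp_def)
  qed
  then obtain i where i: "i < n" "0 < m i" "P (m(i := m i - 1)) \<noteq> 0" by blast
  hence "m = (m(i := m i - 1))(i := (m(i := m i - 1)) i + 1)" by auto
  thus "m \<in> (\<lambda>(i,b). b(i := b i + 1)) ` ({..<n} \<times> supp P)"
  proof -
    have "(i, m(i := m i - 1)) \<in> {..<n} \<times> supp P" using i by (simp add: supp_def)
    thus ?thesis using \<open>m = _\<close> by (metis (no_types, lifting) case_prod_conv image_eqI)
  qed
qed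

lemma finite_supp_lmult: "finite (supp P) \<Longrightarrow> finite (supp (lmult n a P))"
  by (rule finite_subset[OF supp_lmult]) auto

lemma finite_supp_lpow: "finite (supp (lpow n a k))"
  by (induction k) (auto simp: lpow_0 lpow_Suc supp_pone finite_supp_lmult)

lemma apply_op_lmult:
  assumes fin: "finite (supp \<Psi>)"
  shows "apply_op n (lmult n a \<Psi>) H = apply_op n \<Psi> (dop n a H)"
proof (rule ext)
  fix k
  define S where "S = (\<lambda>(i,b). b(i := b i + 1)) ` ({..<n} \<times> supp \<Psi>)"
  have finS: "finite S" using fin by (auto simp: S_def)
  have inner: "(\<Sum>m\<in>S. (if 0 < m i then \<Psi> (m(i := m i - 1)) * diffmono n m H k else 0))
      = (\<Sum>b\<in>supp \<Psi>. \<Psi> b * diffmono n (b(i := b i + 1)) H k)" if i: "i < n" for i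
  proof -
    let ?u = "\<lambda>b::mono. b(i := b i + 1)"
    have "(\<Sum>b\<in>supp \<Psi>. \<Psi> b * diffmono n (b(i := b i + 1)) H k)
        = (\<Sum>m\<in>?u ` supp \<Psi>. (if 0 < m i then \<Psi> (m(i := m i - 1)) * diffmono n m H k else 0))"
      by (subst sum.reindex) (auto intro: inj_on_subset[OF upd_inj] inj_on_subset[OF upd_inj'])
    also have "\<dots> = (\<Sum>m\<in>S. (if 0 < m i then \<Psi> (m(i := m i - 1)) * diffmono n m H k else 0))"
    proof (rule sum.mono_neutral_left[OF finS])
      show "?u ` supp \<Psi> \<subseteq> S" using i by (auto simp: S_def)
      show "\<forall>m\<in>S - ?u ` supp \<Psi>. (if 0 < m i then \<Psi> (m(i := m i - 1)) * diffmono n m H k else 0) = 0"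
      proof
        fix m assume m: "m \<in> S - ?u ` supp \<Psi>"
        show "(if 0 < m i then \<Psi> (m(i := m i - 1)) * diffmono n m H k else 0) = 0"
        proof (cases "0 < m i")
          case True
          hence "m = ?u (m(i := m i - 1))" by auto
          hence "m(i := m i - 1) \<notin> supp \<Psi>" using m by blast
          thus ?thesis by (auto simp: supp_def)
        qed auto
      qed
    qed
    finally show ?thesis ..
  qed
  have "apply_op n (lmult n a \<Psi>) H k = (\<Sum>m\<in>S. lmult n a \<Psi> m * diffmono n m H k)"
    using apply_op_alt[OF finS supp_lmult[of n a \<Psi>, folded S_def]] by simp
  also have "\<dots> = (\<Sum>i<n. a i * (\<Sum>m\<in>S. (if 0 < m i then \<Psi> (m(i := m i - 1)) * diffmono n m H k else 0)))"
    unfolding lmult_def sum_distrib_right by (subst sum.swap) (auto simp: sum_distrib_left algebra_simps intro!: sum.cong)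
  also have "\<dots> = (\<Sum>i<n. a i * (\<Sum>b\<in>supp \<Psi>. \<Psi> b * diffmono n b (pderiv_i i H) k))"
    by (auto simp: inner diffmono_upd diffmono_upd' diffmono_pderiv_comm intro!: sum.cong)
  also have "\<dots> = (\<Sum>b\<in>supp \<Psi>. \<Psi> b * dop n a (diffmono n b H) k)"
    unfolding dop_def by (auto simp: sum_distrib_left algebra_simps diffmono_pderiv_comm intro: sum.swap)
  also have "\<dots> = apply_op n \<Psi> (dop n a H) k"
    by (simp add: apply_op_def diffmono_dop)
  finally show "apply_op n (lmult n a \<Psi>) H k = apply_op n \<Psi> (dop n a H) k" .
qed

lemma ev_inj: "inj ev"
  by (rule injI) (metis ev_def one_neq_zero)

lemma homog1_supp:
  assumes "homog n 1 \<alpha>" "m \<in> supp \<alpha>"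
  shows "\<exists>i<n. m = ev i"
proof -
  have z: "\<forall>i\<ge>n. m i = 0" and s: "(\<Sum>i<n. m i) = 1"
    using assms by (auto simp: homog_def is_poly_def)
  then obtain i where i: "i < n" "m i \<noteq> 0" by (metis lessThan_iff sum.neutral zero_neq_one)
  have "(\<Sum>j<n. m j) = m i + (\<Sum>j\<in>{..<n} - {i}. m j)"
    using i by (simp add: sum.remove)
  hence e: "m i + (\<Sum>j\<in>{..<n} - {i}. m j) = 1" using s by simp
  have mi: "m i = 1" using e i(2) by arith
  have rest: "(\<Sum>j\<in>{..<n} - {i}. m j) = 0" using e i(2) by arith
  hence rest': "\<forall>j\<in>{..<n} - {i}. m j = 0" by (simp add: sum_eq_0_iff)
  have "m = ev i"
  proof
    fix j show "m j = ev i j"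
    proof (cases "j < n")
      case True thus ?thesis using rest' mi by (auto simp: ev_def)
    next
      case False thus ?thesis using z i by (auto simp: ev_def)
    qed
  qed
  thus ?thesis using i by auto
qed

lemma ev_plus_eq:
  "((\<lambda>k. ev i k + c k) = m) \<longleftrightarrow> (0 < m i \<and> c = m(i := m i - 1))"
  by (auto simp: ev_def fun_eq_iff split: if_splits)

lemma pmult_lin:
  assumes h: "homog n 1 \<alpha>" and fin: "finite (supp X)"
  shows "pmult \<alpha> X = lmult n (coef \<alpha>) X"
proof (rule ext)
  fix m
  let ?A = "ev ` {..<n}"
  let ?f = "\<lambda>(b,c). if (\<lambda>i. b i + c i) = m then \<alpha> b * X c else 0"
  have sA: "supp \<alpha> \<subseteq> ?A" using homog1_supp[OF h] by blast
  have "pmult \<alpha> X m = (\<Sum>p\<in>?A \<times> supp X. ?f p)"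
    unfolding pmult_def
    by (rule sum.mono_neutral_left) (use sA fin in \<open>auto simp: supp_def split: if_splits\<close>)
  also have "\<dots> = (\<Sum>b\<in>?A. \<Sum>c\<in>supp X. ?f (b,c))"
    by (simp add: sum.cartesian_product)
  also have "\<dots> = (\<Sum>i<n. \<Sum>c\<in>supp X. ?f (ev i, c))"
    by (subst sum.reindex) (auto intro: inj_on_subset[OF ev_inj])
  also have "\<dots> = (\<Sum>i<n. coef \<alpha> i * (if 0 < m i then X (m(i := m i - 1)) else 0))"
  proof (rule sum.cong[OF refl])
    fix i
    have "(\<Sum>c\<in>supp X. ?f (ev i, c)) = (\<Sum>c\<in>supp X. if c = m(i := m i - 1) then (if 0 < m i then \<alpha> (ev i) * X c else 0) else 0)"
      by (rule sum.cong) (auto simp: ev_plus_eq)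
    also have "\<dots> = coef \<alpha> i * (if 0 < m i then X (m(i := m i - 1)) else 0)"
      using fin by (auto simp: sum.delta coef_def supp_def)
    finally show "(\<Sum>c\<in>supp X. ?f (ev i, c)) = coef \<alpha> i * (if 0 < m i then X (m(i := m i - 1)) else 0)" .
  qed
  also have "\<dots> = lmult n (coef \<alpha>) X m" by (simp add: lmult_def)
  finally show "pmult \<alpha> X m = lmult n (coef \<alpha>) X m" .
qed

lemma ppow_lpow:
  assumes "homog n 1 \<alpha>"
  shows "ppow \<alpha> k = lpow n (coef \<alpha>) k"
  by (induction k) (auto simp: lpow_0 lpow_Suc pmult_lin[OF assms] finite_supp_lpow)

lemma pmult_pone:
  assumes fin: "finite (supp \<alpha>)"
  shows "pmult \<alpha> pone = \<alpha>"
proof (rule ext)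
  fix m
  have "pmult \<alpha> pone m = (\<Sum>b\<in>supp \<alpha>. if b = m then \<alpha> b else 0)"
    unfolding pmult_def supp_pone by (auto simp: sum.cartesian_product[symmetric] intro!: sum.cong)
  also have "\<dots> = \<alpha> m" using fin by (simp add: sum.delta' supp_def)
  finally show "pmult \<alpha> pone m = \<alpha> m" .
qed

lemma homog_fin: "homog n d \<alpha> \<Longrightarrow> finite (supp \<alpha>)"
  by (simp add: homog_def is_poly_def)

lemma lin_form_eq:
  assumes "homog n 1 \<alpha>"
  shows "\<alpha> = lmult n (coef \<alpha>) pone"
  using pmult_lin[OF assms, of pone] pmult_pone[OF homog_fin[OF assms]]
  by (simp add: supp_pone)

lemma binom_ops:
  assumes lA: "lin A" and lB: "lin B" and comm: "\<And>X. A (B X) = B (A X)"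
  shows "((\<lambda>X. A X + cscale t (B X)) ^^ d) X =
     (\<Sum>j\<le>d. cscale (of_nat (d choose j) * t ^ j) ((B ^^ j) ((A ^^ (d - j)) X)))"
proof (induction d arbitrary: X)
  case 0 thus ?case by (simp add: fun_eq_iff)
next
  case (Suc d)
  let ?T = "\<lambda>X. A X + cscale t (B X)"
  let ?V = "\<lambda>D j. (B ^^ j) ((A ^^ (D - j)) X)"
  let ?c = "\<lambda>D j. of_nat (D choose j) * t ^ j :: complex"
  have lj: "lin ((B ^^ j) \<circ> (A ^^ k))" for j k by (intro lin_comp lin_funpow lA lB)
  have AkB: "(A ^^ k) (B Y) = B ((A ^^ k) Y)" for k Y by (rule funpow_commute_gen) (rule comm)
  have "(?T ^^ Suc d) X = (?T ^^ d) (?T X)" by (simp add: funpow_Suc_right del: funpow.simps)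
  also have "\<dots> = (\<Sum>j\<le>d. cscale (?c d j) (((B ^^ j) \<circ> (A ^^ (d - j))) (A X + cscale t (B X))))"
    by (simp only: Suc.IH comp_def)
  also have "\<dots> = (\<Sum>j\<le>d. cscale (?c d j) (?V (Suc d) j) + cscale (?c d j * t) (?V (Suc d) (Suc j)))"
  proof (rule sum.cong[OF refl])
    fix j assume j: "j \<in> {..d}"
    have "((B ^^ j) \<circ> (A ^^ (d - j))) (A X + cscale t (B X)) =
        ((B ^^ j) \<circ> (A ^^ (d - j))) (A X) + cscale t (((B ^^ j) \<circ> (A ^^ (d - j))) (B X))"
      using lj[of j "d - j"] unfolding lin_def by metis
    also have "((B ^^ j) \<circ> (A ^^ (d - j))) (A X) = ?V (Suc d) j"
      using j by (simp add: Suc_diff_le funpow_Suc_right del: funpow.simps)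
    also have "((B ^^ j) \<circ> (A ^^ (d - j))) (B X) = ?V (Suc d) (Suc j)"
      using j by (simp add: AkB funpow_Suc_right del: funpow.simps)
    finally have eq: "((B ^^ j) \<circ> (A ^^ (d - j))) (A X + cscale t (B X)) = ?V (Suc d) j + cscale t (?V (Suc d) (Suc j))" .
    show "cscale (?c d j) (((B ^^ j) \<circ> (A ^^ (d - j))) (A X + cscale t (B X))) =
        cscale (?c d j) (?V (Suc d) j) + cscale (?c d j * t) (?V (Suc d) (Suc j))"
      unfolding eq by (simp add: cscale_def fun_eq_iff algebra_simps del: funpow.simps)
  qed
  also have "\<dots> = (\<Sum>j\<le>d. cscale (?c d j) (?V (Suc d) j)) + (\<Sum>j\<le>d. cscale (?c d j * t) (?V (Suc d) (Suc j)))"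
    by (rule sum.distrib)
  also have "(\<Sum>j\<le>d. cscale (?c d j) (?V (Suc d) j)) = (\<Sum>j\<le>Suc d. cscale (?c d j) (?V (Suc d) j))"
    by (simp add: fun_eq_iff)
  also have "\<dots> = cscale (?c d 0) (?V (Suc d) 0) + (\<Sum>j\<le>d. cscale (?c d (Suc j)) (?V (Suc d) (Suc j)))"
    by (rule sum.atMost_Suc_shift)
  also have "cscale (?c d 0) (?V (Suc d) 0) + (\<Sum>j\<le>d. cscale (?c d (Suc j)) (?V (Suc d) (Suc j)))
      + (\<Sum>j\<le>d. cscale (?c d j * t) (?V (Suc d) (Suc j)))
      = cscale (?c (Suc d) 0) (?V (Suc d) 0) + (\<Sum>j\<le>d. cscale (?c (Suc d) (Suc j)) (?V (Suc d) (Suc j)))"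
    by (simp add: fun_eq_iff fun_sum_apply sum.distrib[symmetric] algebra_simps)
  also have "\<dots> = (\<Sum>j\<le>Suc d. cscale (?c (Suc d) j) (?V (Suc d) j))"
    by (rule sum.atMost_Suc_shift[symmetric])
  finally show ?case .
qed

lemma lmult_coef_fun: "lmult n (\<lambda>i. a i + t * b i) = (\<lambda>X. lmult n a X + cscale t (lmult n b X))"
  by (rule ext) (simp add: lmult_add_coef lmult_scale_coef)

lemma lpow_binom:
  "lpow n (\<lambda>i. a i + t * b i) d =
     (\<Sum>j\<le>d. cscale (of_nat (d choose j) * t ^ j) ((lmult n b ^^ j) (lpow n a (d - j))))"
  unfolding lpow_def lmult_coef_fun
  by (rule binom_ops) (auto simp: lin_lmult lmult_comm)

lemma cis_pow_ne1:
  assumes N: "0 < N" and p: "0 < p" "p < N"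
  shows "cis (2 * pi / real N) ^ p \<noteq> 1"
proof
  assume "cis (2 * pi / real N) ^ p = 1"
  hence "cis (real p * (2 * pi / real N)) = 1" by (simp add: DeMoivre)
  hence "cos (real p * (2 * pi / real N)) = 1" by (simp add: complex_eq_iff)
  then obtain k :: int where k: "real p * (2 * pi / real N) = of_int k * 2 * pi"
    by (auto simp: cos_one_2pi_int)
  hence "real p = of_int k * real N" using N by (simp add: field_simps)
  hence "int p = k * int N" by (metis of_int_eq_iff of_int_mult of_int_of_nat_eq)
  moreover have "k \<le> 0 \<or> k \<ge> 1" by auto
  ultimately show False using p
    by (metis int_one_le_iff_zero_less le_less_trans mult_le_cancel_right1 mult_nonpos_nonneg
        of_nat_0_le_iff of_nat_less_iff of_nat_0_less_iff not_le)
qed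

lemma cis_pow_N: "0 < N \<Longrightarrow> cis (2 * pi / real N) ^ N = 1"
  by (simp add: DeMoivre complex_eq_iff)

lemma root_sum:
  assumes N: "0 < N" and j: "j < N" and k: "k < N"
  shows "(\<Sum>s<N. (cis (2 * pi / real N) ^ s) ^ (N - k + j)) = (if j = k then of_nat N else 0)"
proof -
  define w where "w = cis (2 * pi / real N)"
  have wN: "w ^ N = 1" using cis_pow_N[OF N] by (simp add: w_def)
  have "(\<Sum>s<N. (w ^ s) ^ (N - k + j)) = (\<Sum>s<N. (w ^ (N - k + j)) ^ s)"
    by (simp add: power_mult[symmetric] mult.commute)
  also have "\<dots> = (if j = k then of_nat N else 0)"
  proof (cases "j = k")
    case True thus ?thesis using k wN by simp
  next
    case False
    have z1: "w ^ (N - k + j) \<noteq> 1"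
    proof (cases "j < k")
      case True thus ?thesis using cis_pow_ne1[OF N, of "N - k + j"] j k by (simp add: w_def)
    next
      case False
      have e: "N - k + j = N + (j - k)" and jk: "0 < j - k" "j - k < N" using False \<open>j \<noteq> k\<close> j k by auto
      have "w ^ (N - k + j) = w ^ (j - k)" by (simp only: e power_add wN mult_1_left)
      thus ?thesis using cis_pow_ne1[OF N jk] by (simp add: w_def)
    qed
    have "(w ^ (N - k + j)) ^ N = 1" by (simp add: power_mult[symmetric] mult.commute power_mult wN)
    thus ?thesis using False z1 by (simp add: geometric_sum)
  qed
  finally show ?thesis by (simp add: w_def)
qed

definition Sd :: "nat \<Rightarrow> nat \<Rightarrow> cpoly set" where
  "Sd n d = V.span (range (\<lambda>c. lpow n c d))"

lemma key:
  "(lmult n b ^^ k) (lpow n a e) \<in> Sd n (e + k)"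
proof -
  define d where "d = e + k"
  define N where "N = Suc d"
  define w where "w = cis (2 * pi / real N)"
  define Y where "Y = (\<lambda>j. (lmult n b ^^ j) (lpow n a (d - j)))"
  define W where "W = (\<Sum>s<N. cscale ((w ^ s) ^ (N - k)) (lpow n (\<lambda>i. a i + w ^ s * b i) d))"
  have WS: "W \<in> Sd n d" unfolding W_def Sd_def
    by (intro V.span_sum V.span_scale V.span_base) auto
  have "W = cscale (of_nat (d choose k) * of_nat N) (Y k)"
  proof (rule ext)
    fix x
    have "W x = (\<Sum>s<N. (w ^ s) ^ (N - k) * (\<Sum>j\<le>d. of_nat (d choose j) * (w ^ s) ^ j * Y j x))"
      unfolding W_def lpow_binom by (simp add: fun_sum_apply Y_def)
    also have "\<dots> = (\<Sum>s<N. \<Sum>j\<le>d. of_nat (d choose j) * Y j x * (w ^ s) ^ (N - k + j))"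
      by (simp add: sum_distrib_left power_add algebra_simps)
    also have "\<dots> = (\<Sum>j\<le>d. \<Sum>s<N. of_nat (d choose j) * Y j x * (w ^ s) ^ (N - k + j))"
      by (rule sum.swap)
    also have "\<dots> = (\<Sum>j\<le>d. of_nat (d choose j) * Y j x * (\<Sum>s<N. (w ^ s) ^ (N - k + j)))"
      by (simp add: sum_distrib_left)
    also have "\<dots> = (\<Sum>j\<le>d. if j = k then of_nat (d choose k) * Y k x * of_nat N else 0)"
    proof (rule sum.cong[OF refl])
      fix j assume "j \<in> {..d}"
      hence "(\<Sum>s<N. (w ^ s) ^ (N - k + j)) = (if j = k then of_nat N else 0)"
        unfolding w_def by (intro root_sum) (auto simp: N_def d_def)
      thus "of_nat (d choose j) * Y j x * (\<Sum>s<N. (w ^ s) ^ (N - k + j)) =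
          (if j = k then of_nat (d choose k) * Y k x * of_nat N else 0)" by simp
    qed
    also have "\<dots> = of_nat (d choose k) * of_nat N * Y k x" by (simp add: d_def)
    finally show "W x = cscale (of_nat (d choose k) * of_nat N) (Y k) x" by simp
  qed
  moreover have "of_nat (d choose k) * of_nat N \<noteq> (0::complex)" unfolding N_def d_def by (simp only: of_nat_mult[symmetric] of_nat_eq_0_iff) simp
  ultimately have "Y k = cscale (1 / (of_nat (d choose k) * of_nat N)) W"
    by (simp add: fun_eq_iff)
  hence "Y k \<in> Sd n d" using WS unfolding Sd_def by (simp add: V.span_scale)
  thus ?thesis by (simp add: Y_def d_def)
qed

definition monc :: "mono \<Rightarrow> cpoly" where "monc m = (\<lambda>x. if x = m then 1 else 0)"
definition delta :: "nat \<Rightarrow> nat \<Rightarrow> complex" where "delta j = (\<lambda>i. if i = j then 1 else 0)"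

lemma lin_span_image: "lin L \<Longrightarrow> Y \<in> V.span X \<Longrightarrow> L Y \<in> V.span (L ` X)"
proof -
  assume l: "lin L" and "Y \<in> V.span X"
  then obtain t r where t: "finite t" "t \<subseteq> X" and Y: "Y = (\<Sum>a\<in>t. cscale (r a) a)"
    unfolding V.span_explicit by blast
  have "L Y = (\<Sum>a\<in>t. cscale (r a) (L a))" using l unfolding Y by (simp add: lin_sum lin_def)
  also have "\<dots> \<in> V.span (L ` X)" using t by (intro V.span_sum V.span_scale V.span_base) auto
  finally show ?thesis .
qed

lemma lmult_delta: "j < n \<Longrightarrow> lmult n (delta j) (monc m) = monc (m(j := Suc (m j)))"
proof (rule ext)
  fix x assume j: "j < n"
  have "lmult n (delta j) (monc m) x = (\<Sum>i<n. if i = j then (if 0 < x i then monc m (x(i := x i - 1)) else 0) else 0)"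
    unfolding lmult_def by (rule sum.cong) (auto simp: delta_def)
  also have "\<dots> = (if 0 < x j then monc m (x(j := x j - 1)) else 0)" using j by (simp add: sum.delta)
  also have "\<dots> = monc (m(j := Suc (m j))) x"
  proof (cases "0 < x j")
    case True
    have "(x(j := x j - 1) = m) = (x = m(j := Suc (m j)))"
    proof
      assume h: "x(j := x j - 1) = m"
      have "x = (x(j := x j - 1))(j := Suc (x j - 1))" using True by simp
      also have "\<dots> = m(j := Suc (m j))" using h by (metis fun_upd_same)
      finally show "x = m(j := Suc (m j))" .
    next
      assume h: "x = m(j := Suc (m j))"
      thus "x(j := x j - 1) = m" by simp
    qed
    thus ?thesis using True by (simp add: monc_def)
  next
    case False
    hence "x \<noteq> m(j := Suc (m j))" by (metis fun_upd_same zero_less_Suc)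
    thus ?thesis using False by (simp add: monc_def)
  qed
  finally show "lmult n (delta j) (monc m) x = monc (m(j := Suc (m j))) x" .
qed

lemma lmult_delta_pow: "j < n \<Longrightarrow> (lmult n (delta j) ^^ k) (monc m) = monc (m(j := m j + k))"
  by (induction k) (auto simp: lmult_delta)

lemma pone_monc: "pone = monc (\<lambda>_. 0)" by (simp add: pone_def monc_def fun_eq_iff)

lemma foldr_monc:
  "(\<forall>j\<in>set xs. j < n) \<Longrightarrow> distinct xs \<Longrightarrow>
   foldr (\<lambda>j. lmult n (delta j) ^^ m j) xs pone = monc (\<lambda>i. if i \<in> set xs then m i else 0)"
proof (induction xs)
  case Nil thus ?case by (simp add: pone_monc)
next
  case (Cons j xs)
  hence "foldr (\<lambda>j. lmult n (delta j) ^^ m j) (j # xs) pone =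
      monc ((\<lambda>i. if i \<in> set xs then m i else 0)(j := (if j \<in> set xs then m j else 0) + m j))"
    by (simp add: lmult_delta_pow)
  also have "(\<lambda>i. if i \<in> set xs then m i else 0)(j := (if j \<in> set xs then m j else 0) + m j)
      = (\<lambda>i. if i \<in> set (j # xs) then m i else 0)"
  proof -
    have "j \<notin> set xs" using Cons.prems by simp
    thus ?thesis by (intro ext) simp
  qed
  finally show ?case .
qed

lemma foldr_in_Sd:
  "foldr (\<lambda>j. lmult n (delta j) ^^ m j) xs pone \<in> Sd n (sum_list (map m xs))"
proof (induction xs)
  case Nil
  have "pone = lpow n (\<lambda>_. 0) 0" by (simp add: lpow_0)
  thus ?case by (simp add: Sd_def V.span_base)
next
  case (Cons j xs)
  let ?L = "lmult n (delta j) ^^ m j"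
  let ?e = "sum_list (map m xs)"
  have "?L (foldr (\<lambda>j. lmult n (delta j) ^^ m j) xs pone) \<in> V.span (?L ` range (\<lambda>c. lpow n c ?e))"
    using Cons.IH unfolding Sd_def by (intro lin_span_image lin_funpow lin_lmult)
  also have "\<dots> \<subseteq> Sd n (?e + m j)"
    unfolding Sd_def by (intro V.span_minimal) (auto intro: key[unfolded Sd_def])
  finally show ?case by (simp add: add.commute)
qed

lemma monc_in_Sd:
  assumes "\<forall>i\<ge>n. m i = 0"
  shows "monc m \<in> Sd n (\<Sum>i<n. m i)"
proof -
  have "foldr (\<lambda>j. lmult n (delta j) ^^ m j) [0..<n] pone = monc m"
  proof -
    have "(\<lambda>i. if i \<in> set [0..<n] then m i else 0) = m"
    proof
      fix i show "(if i \<in> set [0..<n] then m i else 0) = m i" using assms by (cases "i < n") auto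
    qed
    thus ?thesis using foldr_monc[where xs="[0..<n]" and n=n and m=m] by simp
  qed
  moreover have "sum_list (map m [0..<n]) = (\<Sum>i<n. m i)"
    by (simp add: sum_set_upt_conv_sum_list_nat[symmetric] atLeast0LessThan)
  ultimately show ?thesis using foldr_in_Sd[where xs="[0..<n]" and n=n and m=m] by simp
qed

lemma homog_in_Sd:
  assumes h: "homog n d F"
  shows "F \<in> Sd n d"
proof -
  have fin: "finite (supp F)" using h by (simp add: homog_def is_poly_def)
  have "F = (\<Sum>m\<in>supp F. cscale (F m) (monc m))"
  proof (rule ext)
    fix x
    have "(\<Sum>m\<in>supp F. cscale (F m) (monc m)) x = (\<Sum>m\<in>supp F. if x = m then F m else 0)"
      by (auto simp: fun_sum_apply monc_def intro!: sum.cong)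
    also have "\<dots> = F x" using fin by (simp add: sum.delta supp_def)
    finally show "F x = (\<Sum>m\<in>supp F. cscale (F m) (monc m)) x" ..
  qed
  also have "\<dots> \<in> Sd n d" unfolding Sd_def
  proof (intro V.span_sum V.span_scale)
    fix m assume m: "m \<in> supp F"
    hence "\<forall>i\<ge>n. m i = 0" "(\<Sum>i<n. m i) = d" using h by (auto simp: homog_def is_poly_def)
    thus "monc m \<in> V.span (range (\<lambda>c. lpow n c d))" using monc_in_Sd[of n m] by (simp add: Sd_def)
  qed
  finally show ?thesis .
qed

lemma lmult_cong: "(\<And>i. i < n \<Longrightarrow> a i = b i) \<Longrightarrow> lmult n a = lmult n b"
  unfolding lmult_def by (intro ext sum.cong) auto

lemma lpow_cong: "(\<And>i. i < n \<Longrightarrow> a i = b i) \<Longrightarrow> lpow n a k = lpow n b k"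
  unfolding lpow_def using lmult_cong by metis

lemma coef_linform: "i < n \<Longrightarrow> coef (lmult n a pone) i = a i"
proof -
  assume i: "i < n"
  have "coef (lmult n a pone) i = (\<Sum>j<n. if j = i then a j else 0)"
    unfolding coef_def lmult_def
    by (rule sum.cong) (auto simp: ev_def pone_def fun_eq_iff)
  thus ?thesis using i by simp
qed

lemma homog_linform: "homog n 1 (lmult n a pone)"
proof -
  have fin: "finite (supp (lmult n a pone))" by (rule finite_supp_lmult) (simp add: supp_pone)
  have s: "supp (lmult n a pone) \<subseteq> (\<lambda>i. (\<lambda>_. 0)(i := 1)) ` {..<n}"
    using supp_lmult[of n a pone] by (auto simp: supp_pone)
  have "\<forall>m\<in>supp (lmult n a pone). (\<forall>i\<ge>n. m i = 0) \<and> (\<Sum>i<n. m i) = 1"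
  proof
    fix m assume "m \<in> supp (lmult n a pone)"
    then obtain i where i: "i < n" "m = (\<lambda>_. 0)(i := 1)" using s by blast
    have "(\<Sum>j<n. m j) = (\<Sum>j<n. if j = i then 1 else 0)" using i by (intro sum.cong) auto
    thus "(\<forall>i\<ge>n. m i = 0) \<and> (\<Sum>i<n. m i) = 1" using i by auto
  qed
  thus ?thesis using fin by (auto simp: homog_def is_poly_def)
qed

lemma ppow_linform: "ppow (lmult n a pone) d = lpow n a d"
  using ppow_lpow[OF homog_linform] lpow_cong[of n "coef (lmult n a pone)" a] coef_linform by metis

lemma waring_exists:
  assumes h: "homog n d F"
  shows "\<exists>(r::nat) c l. (\<forall>i<r. homog n 1 (l i)) \<and> F = (\<lambda>m. \<Sum>i<r. c i * ppow (l i) d m)"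
proof -
  have "F \<in> V.span (range (\<lambda>c. lpow n c d))" using homog_in_Sd[OF h] by (simp add: Sd_def)
  then obtain t u where t: "finite t" "t \<subseteq> range (\<lambda>c. lpow n c d)" and F: "F = (\<Sum>v\<in>t. cscale (u v) v)"
    unfolding V.span_explicit by blast
  obtain hh where hh: "bij_betw hh {0..<card t} t" using ex_bij_betw_nat_finite[OF t(1)] by blast
  define A where "A v = (SOME c. v = lpow n c d)" for v
  have A: "v = lpow n (A v) d" if "v \<in> t" for v
  proof -
    from that t(2) obtain c where "v = lpow n c d" by blast
    thus ?thesis unfolding A_def by (rule someI[of "\<lambda>c. v = lpow n c d" c])
  qed
  define l where "l i = lmult n (A (hh i)) pone" for i
  define c where "c i = u (hh i)" for i
  have L1: "\<forall>i<card t. homog n 1 (l i)" unfolding l_def using homog_linform by blast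
  have L2: "F = (\<lambda>m. \<Sum>i<card t. c i * ppow (l i) d m)"
  proof (rule ext)
    fix m
    have "F m = (\<Sum>v\<in>t. u v * v m)" unfolding F by (simp add: fun_sum_apply)
    also have "\<dots> = (\<Sum>i\<in>{0..<card t}. u (hh i) * hh i m)"
      by (rule sum.reindex_bij_betw[OF hh, symmetric])
    also have "\<dots> = (\<Sum>i<card t. c i * ppow (l i) d m)"
      unfolding atLeast0LessThan
    proof (rule sum.cong[OF refl])
      fix i assume "i \<in> {..<card t}"
      hence "hh i \<in> t" using hh by (auto simp: bij_betw_def)
      thus "u (hh i) * hh i m = c i * ppow (l i) d m"
        by (simp add: c_def l_def ppow_linform A[symmetric])
    qed
    finally show "F m = (\<Sum>i<card t. c i * ppow (l i) d m)" .
  qed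
  show ?thesis
    apply (rule exI[where x="card t"])
    apply (rule exI[where x=c])
    apply (rule exI[where x=l])
    using L1 L2 by simp
qed

lemma fin_basis:
  assumes "finite T" "X \<subseteq> V.span T"
  obtains Bb where "Bb \<subseteq> X" "V.independent Bb" "X \<subseteq> V.span Bb" "card Bb = V.dim X" "finite Bb"
proof -
  obtain Bb where Bb: "Bb \<subseteq> X" "V.independent Bb" "X \<subseteq> V.span Bb" "card Bb = V.dim X"
    by (rule V.basis_exists)
  have "finite Bb" using V.independent_span_bound[OF assms(1) Bb(2)] Bb(1) assms(2) by auto
  thus ?thesis using Bb that by blast
qed

lemma dim_mono':
  assumes "finite T" "Y \<subseteq> V.span T" "X \<subseteq> V.span Y"
  shows "V.dim X \<le> V.dim Y"
proof -
  obtain Bb where Bb: "Bb \<subseteq> Y" "V.independent Bb" "Y \<subseteq> V.span Bb" "card Bb = V.dim Y" "finite Bb"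
    using fin_basis[OF assms(1,2)] by blast
  have "V.span Y \<subseteq> V.span Bb" using Bb(3) V.span_minimal[of Y "V.span Bb"] by simp
  hence "X \<subseteq> V.span Bb" using assms(3) by blast
  thus ?thesis using V.dim_le_card[OF _ Bb(5)] Bb(4) by simp
qed

lemma lin_span_image_set: "lin L \<Longrightarrow> L ` V.span X \<subseteq> V.span (L ` X)"
  using lin_span_image by blast

lemma lin_diff: assumes "lin L" shows "L (x - y) = L x - L y"
proof -
  have "L ((x - y) + y) = L (x - y) + L y" using assms unfolding lin_def by blast
  thus ?thesis by (simp add: eq_diff_eq)
qed

lemma step1:
  assumes l: "lin D" and T: "finite T" and WT: "W \<subseteq> V.span T" and sW: "V.subspace W"
  shows "V.dim W \<le> V.dim (D ` W) + V.dim {x \<in> W. D x = 0}"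
proof -
  have DWT: "D ` W \<subseteq> V.span (D ` T)" using lin_span_image_set[OF l, of T] WT by blast
  obtain C where C: "C \<subseteq> D ` W" "V.independent C" "D ` W \<subseteq> V.span C" "card C = V.dim (D ` W)" "finite C"
    using fin_basis[OF _ DWT] T by blast
  define pre where "pre c = (SOME w. w \<in> W \<and> D w = c)" for c
  have pre: "pre c \<in> W \<and> D (pre c) = c" if cC: "c \<in> C" for c
  proof -
    obtain w where w: "w \<in> W \<and> D w = c" using cC C(1) by blast
    show ?thesis unfolding pre_def by (rule someI[of "\<lambda>w. w \<in> W \<and> D w = c", OF w])
  qed
  let ?K = "{x \<in> W. D x = 0}"
  obtain Kb where Kb: "Kb \<subseteq> ?K" "V.independent Kb" "?K \<subseteq> V.span Kb" "card Kb = V.dim ?K" "finite Kb"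
    using fin_basis[OF T, of ?K] WT by blast
  have "W \<subseteq> V.span (pre ` C \<union> Kb)"
  proof
    fix w assume w: "w \<in> W"
    have "D w \<in> V.span C" using w C(3) by blast
    then obtain u where u: "D w = (\<Sum>c\<in>C. cscale (u c) c)" using V.span_finite[OF C(5)] by auto
    define z where "z = (\<Sum>c\<in>C. cscale (u c) (pre c))"
    have zW: "z \<in> W" unfolding z_def using pre by (intro V.subspace_sum[OF sW] V.subspace_scale[OF sW]) auto
    have Dz: "D z = D w" unfolding z_def u using l pre by (simp add: lin_sum lin_def)
    have "w - z \<in> ?K" using w zW Dz V.subspace_diff[OF sW] lin_diff[OF l] by auto
    hence "w - z \<in> V.span (pre ` C \<union> Kb)" using Kb(3) V.span_mono[of Kb "pre ` C \<union> Kb"] by blast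
    moreover have "z \<in> V.span (pre ` C \<union> Kb)" unfolding z_def
      by (intro V.span_sum V.span_scale V.span_base) auto
    ultimately have "(w - z) + z \<in> V.span (pre ` C \<union> Kb)" by (rule V.span_add)
    thus "w \<in> V.span (pre ` C \<union> Kb)" by simp
  qed
  hence "V.dim W \<le> card (pre ` C \<union> Kb)" using C(5) Kb(5) by (intro V.dim_le_card) auto
  also have "\<dots> \<le> card (pre ` C) + card Kb" by (rule card_Un_le)
  also have "\<dots> \<le> card C + card Kb" using card_image_le[OF C(5)] by simp
  finally show ?thesis using C(4) Kb(4) by simp
qed

lemma step2:
  assumes l: "lin D" and B: "finite B" and E: "finite E"
    and K: "K \<subseteq> V.span (B \<union> E)" "\<forall>x\<in>K. D x = 0"
    and BD: "B \<subseteq> D ` V.span (B \<union> E)"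
  shows "V.dim K \<le> card E"
proof -
  have fT: "finite (B \<union> E)" using B E by simp
  obtain Kb where Kb: "Kb \<subseteq> K" "V.independent Kb" "K \<subseteq> V.span Kb" "card Kb = V.dim K" "finite Kb"
    using fin_basis[OF fT K(1)] by blast
  obtain Bb where Bb: "Bb \<subseteq> B" "V.independent Bb" "B \<subseteq> V.span Bb" "card Bb = V.dim B" "finite Bb"
    using fin_basis[OF fT, of B] V.span_superset[of "B \<union> E"] by blast
  define v where "v b = (SOME x. x \<in> V.span (B \<union> E) \<and> D x = b)" for b
  have v: "v b \<in> V.span (B \<union> E) \<and> D (v b) = b" if bB: "b \<in> Bb" for b
  proof -
    obtain x where x: "x \<in> V.span (B \<union> E) \<and> D x = b" using bB Bb(1) BD by blast
    show ?thesis unfolding v_def by (rule someI[of "\<lambda>x. x \<in> V.span (B \<union> E) \<and> D x = b", OF x])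
  qed
  have injv: "inj_on v Bb"
  proof (rule inj_onI)
    fix x y assume xy: "x \<in> Bb" "y \<in> Bb" "v x = v y"
    have "D (v x) = x" "D (v y) = y" using v[OF xy(1)] v[OF xy(2)] by blast+
    thus "x = y" using xy(3) by metis
  qed
  have disj: "Kb \<inter> v ` Bb = {}"
  proof (rule ccontr)
    assume "Kb \<inter> v ` Bb \<noteq> {}"
    then obtain b where b: "b \<in> Bb" "v b \<in> Kb" by blast
    hence "b = 0" using v[OF b(1)] K(2) Kb(1) by auto
    thus False using b(1) Bb(2) V.dependent_zero by blast
  qed
  have fin: "finite (Kb \<union> v ` Bb)" using Kb(5) Bb(5) by simp
  have ind: "V.independent (Kb \<union> v ` Bb)"
  proof (rule V.independent_if_scalars_zero[OF fin])
    fix f x assume sum0: "(\<Sum>x\<in>Kb \<union> v ` Bb. cscale (f x) x) = 0" and x: "x \<in> Kb \<union> v ` Bb"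
    have "0 = D (\<Sum>x\<in>Kb \<union> v ` Bb. cscale (f x) x)" using sum0 lin_zero[OF l] by simp
    also have "\<dots> = (\<Sum>x\<in>Kb \<union> v ` Bb. cscale (f x) (D x))" using l by (simp add: lin_sum lin_def)
    also have "\<dots> = (\<Sum>x\<in>Kb. cscale (f x) (D x)) + (\<Sum>x\<in>v ` Bb. cscale (f x) (D x))"
      using disj Kb(5) Bb(5) by (simp add: sum.union_disjoint)
    also have "(\<Sum>x\<in>Kb. cscale (f x) (D x)) = 0"
      using Kb(1) K(2) by (intro sum.neutral) (auto simp: cscale_def fun_eq_iff)
    also have "(\<Sum>x\<in>v ` Bb. cscale (f x) (D x)) = (\<Sum>b\<in>Bb. cscale (f (v b)) b)"
      using injv v by (simp add: sum.reindex)
    finally have s1': "0 = 0 + (\<Sum>b\<in>Bb. cscale (f (v b)) b)" .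
    hence s1: "(\<Sum>b\<in>Bb. cscale (f (v b)) b) = 0" by simp
    have nd: "\<not> ((\<exists>b\<in>Bb. f (v b) \<noteq> 0) \<and> (\<Sum>b\<in>Bb. cscale (f (v b)) b) = 0)"
      using Bb(2)[unfolded V.dependent_finite[OF Bb(5)] not_ex, rule_format, of "\<lambda>b. f (v b)"] .
    have fv: "f (v b) = 0" if "b \<in> Bb" for b
      using nd s1 that by blast
    have "(\<Sum>x\<in>Kb \<union> v ` Bb. cscale (f x) x) = (\<Sum>x\<in>Kb. cscale (f x) x) + (\<Sum>x\<in>v ` Bb. cscale (f x) x)"
      using disj Kb(5) Bb(5) by (simp add: sum.union_disjoint)
    also have "(\<Sum>x\<in>v ` Bb. cscale (f x) x) = 0"
      using fv by (intro sum.neutral) (auto simp: cscale_def fun_eq_iff)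
    finally have s2': "(\<Sum>x\<in>Kb \<union> v ` Bb. cscale (f x) x) = (\<Sum>x\<in>Kb. cscale (f x) x) + 0" .
    hence s2: "(\<Sum>x\<in>Kb. cscale (f x) x) = 0" using sum0 by (simp del: cscale_apply)
    show "f x = 0"
    proof (cases "x \<in> Kb")
      case True
      have "\<not> ((\<exists>b\<in>Kb. f b \<noteq> 0) \<and> (\<Sum>b\<in>Kb. cscale (f b) b) = 0)"
        using Kb(2)[unfolded V.dependent_finite[OF Kb(5)] not_ex, rule_format, of f] .
      thus ?thesis using True s2 by blast
    next
      case False thus ?thesis using x fv by auto
    qed
  qed
  have sub: "Kb \<union> v ` Bb \<subseteq> V.span (Bb \<union> E)"
  proof -
    have "V.span (B \<union> E) \<subseteq> V.span (Bb \<union> E)"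
      using Bb(3) by (intro V.span_minimal) (auto intro: V.span_base V.span_mono[THEN subsetD, of Bb "Bb \<union> E"])
    moreover have "Kb \<union> v ` Bb \<subseteq> V.span (B \<union> E)" using Kb(1) K(1) v by auto
    ultimately show ?thesis by blast
  qed
  have "card (Kb \<union> v ` Bb) \<le> card (Bb \<union> E)"
    using V.independent_span_bound[OF _ ind sub] Bb(5) E by simp
  also have "\<dots> \<le> card Bb + card E" by (rule card_Un_le)
  finally have "card Kb + card Bb \<le> card Bb + card E"
    using disj Kb(5) Bb(5) injv by (simp add: card_Un_disjoint card_image)
  thus ?thesis using Kb(4) by simp
qed

lemma AL:
  assumes l: "lin D" and B: "finite B" and E: "finite E"
    and WT: "W \<subseteq> V.span (B \<union> E)"
    and BD: "B \<subseteq> D ` V.span (B \<union> E)"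
  shows "V.dim W \<le> V.dim (D ` W) + card E"
proof -
  let ?T = "B \<union> E"
  have fT: "finite ?T" using B E by simp
  let ?W = "V.span W"
  have WT': "?W \<subseteq> V.span ?T" using WT V.span_minimal[of W "V.span ?T"] by simp
  have "V.dim W = V.dim ?W" by simp
  also have "\<dots> \<le> V.dim (D ` ?W) + V.dim {x \<in> ?W. D x = 0}"
    by (rule step1[OF l fT WT']) auto
  also have "V.dim {x \<in> ?W. D x = 0} \<le> card E"
    by (rule step2[OF l B E _ _ BD]) (use WT' in auto)
  also have "V.dim (D ` ?W) \<le> V.dim (D ` W)"
  proof (rule dim_mono')
    show "finite (D ` ?T)" using fT by simp
    show "D ` W \<subseteq> V.span (D ` ?T)" using lin_span_image_set[OF l, of ?T] WT by blast
    show "D ` ?W \<subseteq> V.span (D ` W)" by (rule lin_span_image_set[OF l])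
  qed
  finally show ?thesis by simp
qed

lemma diffmono_lpow:
  "\<exists>c k'. k' \<le> k \<and> diffmono n m (lpow n lam k) = cscale c (lpow n lam k')"
proof -
  define Q where "Q X \<longleftrightarrow> (\<exists>c k'. k' \<le> k \<and> X = cscale c (lpow n lam k'))" for X
  have pd: "Q (pderiv_i j X)" if "Q X" for j X
  proof -
    obtain c k' where ck: "k' \<le> k" "X = cscale c (lpow n lam k')" using \<open>Q X\<close> Q_def by blast
    have "pderiv_i j X = cscale c (pderiv_i j (lpow n lam k'))"
      using lin_pderiv[of j] ck(2) by (simp add: lin_def)
    also have "\<dots> = cscale (c * (of_nat k' * (if j < n then lam j else 0))) (lpow n lam (k' - 1))"
      by (simp add: pderiv_lpow cscale_def fun_eq_iff)
    finally have eq: "pderiv_i j X = cscale (c * (of_nat k' * (if j < n then lam j else 0))) (lpow n lam (k' - 1))" .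
    have "k' - 1 \<le> k" using ck(1) by simp
    thus ?thesis unfolding Q_def using eq by blast
  qed
  have fp: "Q ((f ^^ t) X)" if "\<And>Y. Q Y \<Longrightarrow> Q (f Y)" "Q X" for f t X
    using that by (induction t) auto
  have fo: "Q (foldr (\<lambda>j. pderiv_i j ^^ m j) xs X)" if "Q X" for xs X
    using that by (induction xs) (auto intro: fp pd)
  have "Q (lpow n lam k)" unfolding Q_def by (intro exI[of _ 1] exI[of _ k]) (simp add: cscale_def)
  hence "Q (diffmono n m (lpow n lam k))" unfolding diffmono_def by (rule fo)
  thus ?thesis unfolding Q_def .
qed

lemma apply_op_as_sum: "apply_op n \<Theta> H = (\<Sum>m\<in>supp \<Theta>. cscale (\<Theta> m) (diffmono n m H))"
  by (simp add: apply_op_def fun_eq_iff fun_sum_apply)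

theorem mainTheorem5:
  fixes n d :: nat and F \<alpha> :: cpoly
  assumes "homog n d F"
    and "homog n 1 \<alpha>"
  shows "int (waring_rank n d F) \<ge>
           int (apolar_length n (apply_op n \<alpha> F))
         - int (apolar_length n (apply_op n (ppow \<alpha> 2) F))"
proof -
  note hF = assms(1) and ha = assms(2)
  define a where "a = coef \<alpha>"
  define D where "D = dop n a"
  have lD: "lin D" unfolding D_def by (rule lin_dop)
  have finpone: "finite (supp pone)" by (simp add: supp_pone)
  have appa: "apply_op n \<alpha> H = D H" for H
  proof -
    have "apply_op n \<alpha> H = apply_op n (lmult n a pone) H"
      using lin_form_eq[OF ha] by (simp add: a_def)
    also have "\<dots> = D H" using apply_op_lmult[OF finpone] apply_op_pone by (simp add: D_def)
    finally show ?thesis .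
  qed
  have app2: "apply_op n (ppow \<alpha> 2) F = D (D F)"
  proof -
    have "ppow \<alpha> 2 = lmult n a (lmult n a pone)"
      using ppow_lpow[OF ha, of 2] by (simp add: a_def numeral_2_eq_2 lpow_Suc lpow_0)
    moreover have "finite (supp (lmult n a pone))" by (rule finite_supp_lmult[OF finpone])
    ultimately show ?thesis
      using apply_op_lmult[OF finpone] apply_op_pone by (simp add: apply_op_lmult D_def)
  qed
  define G where "G = D F"
  define W where "W = {apply_op n \<Theta> G | \<Theta>. is_poly n \<Theta>}"
  have W2: "{apply_op n \<Theta> (D G) | \<Theta>. is_poly n \<Theta>} = D ` W"
    unfolding W_def D_def by (auto simp: apply_op_dop)
  have al1: "apolar_length n (apply_op n \<alpha> F) = V.dim W"
    unfolding apolar_length_def W_def G_def appa ..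
  have al2: "apolar_length n (apply_op n (ppow \<alpha> 2) F) = V.dim (D ` W)"
    unfolding apolar_length_def app2 W2[symmetric] G_def ..
  define r where "r = waring_rank n d F"
  have "\<exists>c l. (\<forall>i<r. homog n 1 (l i)) \<and> F = (\<lambda>m. \<Sum>i<r. c i * ppow (l i) d m)"
    unfolding r_def waring_rank_def by (rule LeastI_ex) (rule waring_exists[OF hF])
  then obtain c l where hl: "\<forall>i<r. homog n 1 (l i)" and Fdec: "F = (\<lambda>m. \<Sum>i<r. c i * ppow (l i) d m)"
    by blast
  define P where "P i k = lpow n (coef (l i)) k" for i k
  define s where "s i = (\<Sum>j<n. a j * coef (l i) j)" for i
  define I where "I = {i \<in> {..<r}. s i \<noteq> 0}"
  have finI: "finite I" by (simp add: I_def)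
  have Fsum: "F = (\<Sum>i<r. cscale (c i) (P i d))"
    unfolding Fdec P_def using hl by (auto simp: fun_eq_iff fun_sum_apply ppow_lpow intro!: sum.cong)
  have DP: "D (P i k) = cscale (of_nat k * s i) (P i (k - 1))" for i k
    unfolding D_def P_def s_def by (rule dop_lpow)
  have "G = (\<Sum>i<r. cscale (c i * (of_nat d * s i)) (P i (d - 1)))"
  proof -
    have "D (\<Sum>i<r. cscale (c i) (P i d)) = (\<Sum>i<r. D (cscale (c i) (P i d)))" by (rule lin_sum[OF lD])
    also have "\<dots> = (\<Sum>i<r. cscale (c i * (of_nat d * s i)) (P i (d - 1)))"
    proof (rule sum.cong[OF refl])
      fix i
      have "D (cscale (c i) (P i d)) = cscale (c i) (D (P i d))" using lD by (simp add: lin_def)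
      also have "\<dots> = cscale (c i * (of_nat d * s i)) (P i (d - 1))"
        by (simp only: DP) (simp add: cscale_def fun_eq_iff)
      finally show "D (cscale (c i) (P i d)) = cscale (c i * (of_nat d * s i)) (P i (d - 1))" .
    qed
    finally show ?thesis unfolding G_def Fsum .
  qed
  also have "\<dots> = (\<Sum>i\<in>I. cscale (c i * (of_nat d * s i)) (P i (d - 1)))"
    unfolding I_def by (rule sum.mono_neutral_right) (auto simp: cscale_def fun_eq_iff)
  finally have Gsum: "G = (\<Sum>i\<in>I. cscale (c i * (of_nat d * s i)) (P i (d - 1)))" .
  define B where "B = (\<lambda>(i,k). P i k) ` (I \<times> {..<d - 1})"
  define E where "E = (\<lambda>i. P i (d - 1)) ` I"
  have finB: "finite B" and finE: "finite E" using finI by (auto simp: B_def E_def)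
  have PBE: "P i k \<in> B \<union> E" if "i \<in> I" "k \<le> d - 1" for i k
  proof (cases "k < d - 1")
    case True thus ?thesis using that by (auto simp: B_def)
  next
    case False hence "k = d - 1" using that by simp
    thus ?thesis using that by (auto simp: E_def)
  qed
  have WT: "W \<subseteq> V.span (B \<union> E)"
  proof
    fix w assume "w \<in> W"
    then obtain \<Theta> where w: "w = apply_op n \<Theta> G" unfolding W_def by blast
    have ai: "apply_op n \<Theta> (P i (d - 1)) \<in> V.span (B \<union> E)" if i: "i \<in> I" for i
    proof -
      have "apply_op n \<Theta> (P i (d - 1)) = (\<Sum>m\<in>supp \<Theta>. cscale (\<Theta> m) (diffmono n m (P i (d - 1))))"
        by (rule apply_op_as_sum)
      also have "\<dots> \<in> V.span (B \<union> E)"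
      proof (intro V.span_sum V.span_scale)
        fix m
        obtain cc k' where "k' \<le> d - 1" "diffmono n m (P i (d - 1)) = cscale cc (P i k')"
          using diffmono_lpow unfolding P_def by blast
        thus "diffmono n m (P i (d - 1)) \<in> V.span (B \<union> E)"
          using PBE[OF i] by (auto intro: V.span_scale V.span_base)
      qed
      finally show ?thesis .
    qed
    have "w = (\<Sum>i\<in>I. cscale (c i * (of_nat d * s i)) (apply_op n \<Theta> (P i (d - 1))))"
      unfolding w Gsum using lin_apply_op[of n \<Theta>] by (simp add: lin_sum lin_def)
    also have "\<dots> \<in> V.span (B \<union> E)" using ai by (intro V.span_sum V.span_scale) auto
    finally show "w \<in> V.span (B \<union> E)" .
  qed
  have BD: "B \<subseteq> D ` V.span (B \<union> E)"
  proof
    fix x assume "x \<in> B"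
    then obtain i k where ik: "i \<in> I" "k < d - 1" "x = P i k" unfolding B_def by auto
    have si: "s i \<noteq> 0" using ik(1) by (simp add: I_def)
    define y where "y = cscale (1 / (of_nat (Suc k) * s i)) (P i (Suc k))"
    have "y \<in> V.span (B \<union> E)" unfolding y_def using PBE[OF ik(1), of "Suc k"] ik(2)
      by (intro V.span_scale V.span_base) auto
    moreover have "D y = x"
    proof -
      have "D y = cscale (1 / (of_nat (Suc k) * s i)) (D (P i (Suc k)))"
        unfolding y_def using lD by (simp add: lin_def)
      also have "\<dots> = P i k" using si by (simp add: DP cscale_def fun_eq_iff del: of_nat_Suc)
      finally show ?thesis using ik(3) by simp
    qed
    ultimately show "x \<in> D ` V.span (B \<union> E)" by blast
  qed
  have "V.dim W \<le> V.dim (D ` W) + card E" by (rule AL[OF lD finB finE WT BD])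
  moreover have "card E \<le> r"
  proof -
    have "card E \<le> card I" unfolding E_def by (rule card_image_le[OF finI])
    also have "card I \<le> card {..<r}" unfolding I_def by (rule card_mono) auto
    finally show ?thesis by simp
  qed
  ultimately have "V.dim W \<le> V.dim (D ` W) + r" by simp
  thus ?thesis unfolding al1 al2 r_def[symmetric] by simp
qed

end
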